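(* Let $\nu$ be a partition with $\nu_1\le n$, and let $\nu'$ be its conjugate partition. Then $\nu$ is $n$-colorless if and only if, modulo $n$, the set of integers $\{\nu'_m-m\}_{m=1}^n$ coincides with $\{1,2,\dots,n\}$.
   Context: Here $n\ge3$ is fixed. Let $c_1,\dots,c_{n-1}$ be free generators of a free $\mathbb Z$-module, put $c_0=-(c_1+\dots+c_{n-1})$, and extend the indices $n$-periodically to $\mathbb Z$. For a partition $\gamma$ let $Y(\gamma)=\{(x,y)\in\mathbb Z_{\ge1}^2:\gamma_x\ge y\}$. The partition $\gamma$ is called $n$-colorless if $\sum_{(x,y)\in Y(\gamma)}c_{x-y}=0$; equivalently, for each residue class $i$ mod $n$, the number of boxes $(x,y)\in Y(\gamma)$ with $x-y\equiv i$ is the same. The conjugate partition is given by $\nu'_m=|\{x:\nu_x\ge m\}|$. *)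

theory Defs
  imports Main
begin

definition is_partition :: "nat list \<Rightarrow> bool" where
  "is_partition p \<longleftrightarrow> sorted_wrt (\<ge>) p \<and> 0 \<notin> set p"

definition part :: "nat list \<Rightarrow> nat \<Rightarrow> nat" where
  "part p x = (if 1 \<le> x \<and> x \<le> length p then p ! (x - 1) else 0)"

definition young :: "nat list \<Rightarrow> (nat \<times> nat) set" where
  "young p = {(x, y). 1 \<le> x \<and> 1 \<le> y \<and> y \<le> part p x}"

definition colorless :: "nat \<Rightarrow> nat list \<Rightarrow> bool" where
  "colorless n p \<longleftrightarrow>
     (\<forall>i j :: int. card {(x, y) \<in> young p. (int x - int y) mod int n = i mod int n}
                = card {(x, y) \<in> young p. (int x - int y) mod int n = j mod int n})"

definition conjp :: "nat list \<Rightarrow> nat \<Rightarrow> nat" where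
  "conjp p m = card {x. 1 \<le> x \<and> m \<le> part p x}"

end

theory Submission
  imports Defs
begin


lemma part_mono:
  assumes "is_partition p" "1 \<le> x" "x \<le> x'"
  shows "part p x' \<le> part p x"
proof (cases "x' \<le> length p")
  case False then show ?thesis by (simp add: part_def)
next
  case True
  have s: "sorted_wrt (\<ge>) p" using assms(1) by (simp add: is_partition_def)
  show ?thesis
  proof (cases "x = x'")
    case True then show ?thesis by simp
  next
    case False
    then have "x - 1 < x' - 1" using assms by linarith
    then have "p ! (x'-1) \<le> p ! (x-1)" using sorted_wrt_nth_less[OF s, of "x-1" "x'-1"] True assms by linarith
    then show ?thesis using True assms by (simp add: part_def)
  qed
qed

lemma part_le:
  assumes "is_partition p" "part p 1 \<le> n"
  shows "part p x \<le> n"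
proof (cases "x = 0")
  case True then show ?thesis by (simp add: part_def)
next
  case False then show ?thesis using part_mono[OF assms(1), of 1 x] assms by linarith
qed

lemma col_set:
  assumes "is_partition p" "1 \<le> y"
  shows "{x. 1 \<le> x \<and> y \<le> part p x} = {1..conjp p y}"
proof -
  define S where "S = {x. 1 \<le> x \<and> y \<le> part p x}"
  have sub: "S \<subseteq> {1..length p}"
  proof
    fix x assume "x \<in> S"
    then have "1 \<le> x" "y \<le> part p x" by (simp_all add: S_def)
    then have "x \<le> length p" using assms(2) unfolding part_def by (cases "x \<le> length p") simp_all
    then show "x \<in> {1..length p}" using \<open>1 \<le> x\<close> by simp
  qed
  then have fin: "finite S" using finite_subset by blast
  have dc: "x' \<in> S" if "x \<in> S" "1 \<le> x'" "x' \<le> x" for x x'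
  proof -
    have "y \<le> part p x" using that(1) by (simp add: S_def)
    also have "\<dots> \<le> part p x'" using part_mono[OF assms(1) that(2,3)] .
    finally show ?thesis using that(2) by (simp add: S_def)
  qed
  define k where "k = (if S = {} then 0 else Max S)"
  have Sk: "S = {1..k}"
  proof (cases "S = {}")
    case True then show ?thesis by (simp add: k_def)
  next
    case False
    have M: "Max S \<in> S" using Max_in[OF fin False] .
    have k: "k = Max S" using False by (simp add: k_def)
    show ?thesis
    proof
      show "S \<subseteq> {1..k}"
      proof
        fix x assume x: "x \<in> S"
        then have "x \<le> Max S" using fin by simp
        moreover have "1 \<le> x" using x by (simp add: S_def)
        ultimately show "x \<in> {1..k}" using k by simp
      qed
    next
      show "{1..k} \<subseteq> S"
      proof
        fix x assume "x \<in> {1..k}"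
        then show "x \<in> S" using dc[OF M, of x] k by simp
      qed
    qed
  qed
  have "conjp p y = card S" unfolding conjp_def S_def by simp
  then have "conjp p y = k" using Sk by simp
  then show ?thesis using Sk S_def by simp
qed

lemma card_step:
  "card {x\<in>{1..Suc c}. Q x} = card {x\<in>{1..c}. Q x} + (if Q (Suc c) then 1 else 0)"
proof -
  have "{x\<in>{1..Suc c}. Q x} = (if Q (Suc c) then insert (Suc c) {x\<in>{1..c}. Q x} else {x\<in>{1..c}. Q x})"
    by (auto simp: le_Suc_eq)
  then show ?thesis by simp
qed

lemma mod_shift:
  fixes u i :: int
  shows "(u + 1) mod m = (i + 1) mod m \<longleftrightarrow> u mod m = i mod m"
  by (simp add: mod_eq_dvd_iff)

lemma col_diff:
  fixes b i :: int and c :: nat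
  shows "int (card {x\<in>{1..c}. (int x - b) mod int n = i mod int n})
       - int (card {x\<in>{1..c}. (int x - b) mod int n = (i+1) mod int n})
       = (if (int c - b) mod int n = i mod int n then 1 else 0)
       - (if (- b) mod int n = i mod int n then 1 else 0)"
proof (induction c)
  case 0 then show ?case by simp
next
  case (Suc c)
  have e: "(int (Suc c) - b) mod int n = (i+1) mod int n \<longleftrightarrow> (int c - b) mod int n = i mod int n"
    using mod_shift[of "int c - b" "int n" i] by (simp add: algebra_simps)
  have c1: "card {x\<in>{1..Suc c}. (int x - b) mod int n = i mod int n} = card {x\<in>{1..c}. (int x - b) mod int n = i mod int n} + (if (int (Suc c) - b) mod int n = i mod int n then 1 else 0)"
    by (rule card_step)
  have c2: "card {x\<in>{1..Suc c}. (int x - b) mod int n = (i+1) mod int n} = card {x\<in>{1..c}. (int x - b) mod int n = (i+1) mod int n} + (if (int (Suc c) - b) mod int n = (i+1) mod int n then 1 else 0)"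
    by (rule card_step)
  show ?case unfolding c1 c2 e using Suc.IH by (simp only: of_nat_add) (simp split: if_splits)
qed



lemma young_iff:
  assumes "is_partition p" "part p 1 \<le> n"
  shows "(x, y) \<in> young p \<longleftrightarrow> y \<in> {1..n} \<and> x \<in> {1..conjp p y}"
proof
  assume a: "(x, y) \<in> young p"
  then have y1: "1 \<le> y" and xy: "1 \<le> x \<and> y \<le> part p x" by (auto simp: young_def)
  have "y \<le> n" using xy part_le[OF assms, of x] by linarith
  moreover have "x \<in> {x. 1 \<le> x \<and> y \<le> part p x}" using xy by simp
  ultimately show "y \<in> {1..n} \<and> x \<in> {1..conjp p y}" using col_set[OF assms(1) y1] y1 by auto
next
  assume a: "y \<in> {1..n} \<and> x \<in> {1..conjp p y}"
  then have y1: "1 \<le> y" by simp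
  have "x \<in> {x. 1 \<le> x \<and> y \<le> part p x}" using col_set[OF assms(1) y1] a by simp
  then show "(x, y) \<in> young p" using y1 by (simp add: young_def)
qed

lemma young_count:
  assumes "is_partition p" "part p 1 \<le> n"
  shows "card {(x, y) \<in> young p. Q x y} = (\<Sum>y\<in>{1..n}. card {x\<in>{1..conjp p y}. Q x y})"
proof -
  have "{(x, y) \<in> young p. Q x y} = prod.swap ` (SIGMA y:{1..n}. {x\<in>{1..conjp p y}. Q x y})"
  proof (rule set_eqI)
    fix z :: "nat \<times> nat"
    obtain x y where z: "z = (x, y)" by (cases z)
    have "(x, y) \<in> {(x, y) \<in> young p. Q x y} \<longleftrightarrow> (x, y) \<in> young p \<and> Q x y" by simp
    also have "\<dots> \<longleftrightarrow> (y, x) \<in> (SIGMA y:{1..n}. {x\<in>{1..conjp p y}. Q x y})"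
      using young_iff[OF assms, of x y] by simp
    also have "\<dots> \<longleftrightarrow> (x, y) \<in> prod.swap ` (SIGMA y:{1..n}. {x\<in>{1..conjp p y}. Q x y})"
      by (rule pair_in_swap_image[symmetric])
    finally show "z \<in> {(x, y) \<in> young p. Q x y} \<longleftrightarrow> z \<in> prod.swap ` (SIGMA y:{1..n}. {x\<in>{1..conjp p y}. Q x y})"
      using z by simp
  qed
  then have "card {(x, y) \<in> young p. Q x y} = card (SIGMA y:{1..n}. {x\<in>{1..conjp p y}. Q x y})"
    by (simp add: card_image)
  also have "\<dots> = (\<Sum>y\<in>{1..n}. card {x\<in>{1..conjp p y}. Q x y})"
    by (rule card_SigmaI) auto
  finally show ?thesis .
qed

lemma sum_ind: "(\<Sum>y\<in>A. (if P y then 1 else 0) :: int) = int (card {y\<in>A. P y})" if "finite A"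
proof -
  have "(\<Sum>y\<in>A. (if P y then 1 else 0) :: int) = (\<Sum>y\<in>{y\<in>A. P y}. 1)"
    using sum.inter_filter[OF that, of "\<lambda>_. 1::int" P] by simp
  then show ?thesis by simp
qed

lemma neg_mod:
  assumes "y \<in> {1..n}"
  shows "(- int y) mod int n = int n - int y"
proof -
  have "(- int y) mod int n = (int n - int y) mod int n" by (simp add: mod_diff_left_eq[symmetric])
  also have "\<dots> = int n - int y" using assms by (intro mod_pos_pos_trivial) auto
  finally show ?thesis .
qed

lemma one_hit:
  assumes "n > 0"
  shows "card {y\<in>{1..n}. (- int y) mod int n = i mod int n} = 1"
proof -
  have r: "0 \<le> i mod int n" "i mod int n < int n" using assms by auto
  have "{y\<in>{1..n}. (- int y) mod int n = i mod int n} = {n - nat (i mod int n)}"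
  proof (rule set_eqI)
    fix y
    show "y \<in> {y\<in>{1..n}. (- int y) mod int n = i mod int n} \<longleftrightarrow> y \<in> {n - nat (i mod int n)}"
    proof
      assume "y \<in> {y\<in>{1..n}. (- int y) mod int n = i mod int n}"
      then have "y \<in> {1..n}" "(- int y) mod int n = i mod int n" by simp_all
      then have "int n - int y = i mod int n" using neg_mod by simp
      then show "y \<in> {n - nat (i mod int n)}" using r by simp
    next
      assume "y \<in> {n - nat (i mod int n)}"
      then have y: "y = n - nat (i mod int n)" by simp
      then have yr: "y \<in> {1..n}" using r by auto
      have "int n - int y = i mod int n" using y r by simp
      then show "y \<in> {y\<in>{1..n}. (- int y) mod int n = i mod int n}" using yr neg_mod[OF yr] by simp
    qed
  qed
  then show ?thesis by simp
qed



lemma N_diff: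
  assumes "is_partition p" "part p 1 \<le> n" "n > 0"
  defines "N \<equiv> \<lambda>i::int. int (card {(x, y) \<in> young p. (int x - int y) mod int n = i mod int n})"
  shows "N i - N (i+1) = int (card {m\<in>{1..n}. (int (conjp p m) - int m) mod int n = i mod int n}) - 1"
proof -
  have NN: "N j = (\<Sum>y\<in>{1..n}. int (card {x\<in>{1..conjp p y}. (int x - int y) mod int n = j mod int n}))" for j
    unfolding N_def using young_count[OF assms(1,2), of "\<lambda>x y. (int x - int y) mod int n = j mod int n"]
    by simp
  have "N i - N (i+1) = (\<Sum>y\<in>{1..n}. int (card {x\<in>{1..conjp p y}. (int x - int y) mod int n = i mod int n})
       - int (card {x\<in>{1..conjp p y}. (int x - int y) mod int n = (i+1) mod int n}))"
    unfolding NN by (simp add: sum_subtractf)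
  also have "\<dots> = (\<Sum>y\<in>{1..n}. (if (int (conjp p y) - int y) mod int n = i mod int n then 1 else 0)
       - (if (- int y) mod int n = i mod int n then 1 else 0))"
    by (rule sum.cong[OF refl]) (rule col_diff)
  also have "\<dots> = int (card {m\<in>{1..n}. (int (conjp p m) - int m) mod int n = i mod int n})
       - int (card {y\<in>{1..n}. (- int y) mod int n = i mod int n})"
    by (simp only: sum_subtractf sum_ind finite_atLeastAtMost)
  also have "\<dots> = int (card {m\<in>{1..n}. (int (conjp p m) - int m) mod int n = i mod int n}) - 1"
    using one_hit[OF assms(3)] by simp
  finally show ?thesis .
qed

lemma rhs_set:
  assumes "n > 0"
  shows "(\<lambda>i. i mod int n) ` {1..int n} = {0..<int n}"
proof
  show "(\<lambda>i. i mod int n) ` {1..int n} \<subseteq> {0..<int n}" using assms by auto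
next
  show "{0..<int n} \<subseteq> (\<lambda>i. i mod int n) ` {1..int n}"
  proof
    fix r assume r: "r \<in> {0..<int n}"
    show "r \<in> (\<lambda>i. i mod int n) ` {1..int n}"
    proof (cases "r = 0")
      case True then show ?thesis using assms by (intro image_eqI[of _ _ "int n"]) auto
    next
      case False then show ?thesis using r by (intro image_eqI[of _ _ r]) auto
    qed
  qed
qed



theorem mainTheorem9:
  fixes n :: nat and \<nu> :: "nat list"
  assumes "n \<ge> 3" and "is_partition \<nu>" and "part \<nu> 1 \<le> n"
  shows "colorless n \<nu> \<longleftrightarrow>
    (\<lambda>m. (int (conjp \<nu> m) - int m) mod int n) ` {1..n}
      = (\<lambda>i. i mod int n) ` {1..int n}"
proof -
  have n0: "n > 0" using assms(1) by simp
  define N where "N \<equiv> \<lambda>i::int. int (card {(x, y) \<in> young \<nu>. (int x - int y) mod int n = i mod int n})"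
  define g where "g \<equiv> \<lambda>m. (int (conjp \<nu> m) - int m) mod int n"
  have D: "N i - N (i+1) = int (card {m\<in>{1..n}. g m = i mod int n}) - 1" for i
    using N_diff[OF assms(2,3) n0, of i] unfolding N_def g_def by simp
  have C: "colorless n \<nu> \<longleftrightarrow> (\<forall>i j. N i = N j)"
    unfolding colorless_def N_def by simp
  have gsub: "g ` {1..n} \<subseteq> {0..<int n}" using n0 by (auto simp: g_def)
  have "colorless n \<nu> \<longleftrightarrow> g ` {1..n} = {0..<int n}"
  proof
    assume "colorless n \<nu>"
    then have "N i = N (i+1)" for i using C by blast
    then have one: "card {m\<in>{1..n}. g m = i mod int n} = 1" for i using D[of i] by simp
    show "g ` {1..n} = {0..<int n}"
    proof
      show "{0..<int n} \<subseteq> g ` {1..n}"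
      proof
        fix r assume r: "r \<in> {0..<int n}"
        have "{m\<in>{1..n}. g m = r mod int n} \<noteq> {}" using one[of r] by (metis card.empty zero_neq_one)
        then obtain m where "m \<in> {1..n}" "g m = r mod int n" by blast
        moreover have "r mod int n = r" using r by simp
        ultimately show "r \<in> g ` {1..n}" by force
      qed
    qed (rule gsub)
  next
    assume im: "g ` {1..n} = {0..<int n}"
    have "card (g ` {1..n}) = card {1..n}" using im by simp
    then have inj: "inj_on g {1..n}" using inj_on_iff_eq_card[of "{1..n}" g] by simp
    have one: "card {m\<in>{1..n}. g m = i mod int n} = 1" for i
    proof -
      have "i mod int n \<in> {0..<int n}" using n0 by simp
      then obtain m0 where m0: "m0 \<in> {1..n}" "g m0 = i mod int n" using im by (metis imageE)
      have "{m\<in>{1..n}. g m = i mod int n} = {m0}"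
      proof (rule set_eqI)
        fix m
        show "m \<in> {m\<in>{1..n}. g m = i mod int n} \<longleftrightarrow> m \<in> {m0}"
        proof
          assume "m \<in> {m\<in>{1..n}. g m = i mod int n}"
          then have "m \<in> {1..n}" "g m = g m0" using m0 by auto
          then show "m \<in> {m0}" using inj_onD[OF inj _ _ m0(1)] by blast
        next
          assume "m \<in> {m0}"
          then show "m \<in> {m\<in>{1..n}. g m = i mod int n}" using m0 by simp
        qed
      qed
      then show ?thesis by simp
    qed
    have step: "N i = N (i+1)" for i using D[of i] one[of i] by simp
    have all: "N i = N 0" for i
    proof (induction i rule: int_induct[where k=0])
      case base then show ?case by simp
    next
      case (step1 i) then show ?case using step[of i] by simp
    next
      case (step2 i) then show ?case using step[of "i-1"] by simp
    qed
    have "\<forall>i j. N i = N j"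
    proof (intro allI)
      fix i j show "N i = N j" using all[of i] all[of j] by simp
    qed
    then show "colorless n \<nu>" using C by simp
  qed
  then show ?thesis using rhs_set[OF n0] unfolding g_def by simp
qed


end
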